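(* Let $N\ge2$ and $\mathbf x=(x_0,\dots,x_{N-1})\in\mathbb{C}^N$ with $x_0\neq0$ and $\operatorname{Re}x_0\neq0$; put $\sigma=\operatorname{sign}(\operatorname{Re}x_0)$ and $s=x_0/|x_0|$. Let $H_{\mathbf T},H_{\mathbf M},H_{\mathbf G}$ be the $\mathbf T$-, $\mathbf M$-, $\mathbf G$-type DsiHTs generated by $\mathbf x$. Then $$H_{\mathbf T}=\operatorname{diag}(\sigma,\ \sigma s,\ 1,\dots,1)\,H_{\mathbf M},\qquad H_{\mathbf G}=\operatorname{diag}(s,\ 1,\dots,1)\,H_{\mathbf M}.$$ In particular, rows $2,\dots,N-1$ of $H_{\mathbf T}$, $H_{\mathbf M}$ and $H_{\mathbf G}$ coincide, so $H_{\mathbf T}$ and $H_{\mathbf G}$ differ at most in their first two rows (rows $0$ and $1$), and $H_{\mathbf T}$ and $H_{\mathbf M}$ differ at most in rows $0$ and $1$ (only in row $1$ when $\operatorname{Re}x_0>0$).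
   Context: For $a,b\in\mathbb{C}$ and $n=\sqrt{|a|^2+|b|^2}$: $\mathbf{T}(a,b)=\frac{\operatorname{sign}(\operatorname{Re} a)}{n}\begin{bmatrix}\bar a & \bar b\\ -b & a\end{bmatrix}$ (for $\operatorname{Re}a\ne0$); $\mathbf{M}(a,b)=\frac{1}{n}\begin{bmatrix}\bar a & \bar b\\ -b\,\bar a/|a| & |a|\end{bmatrix}$ and $\mathbf{G}(a,b)=\frac{1}{n}\begin{bmatrix}|a| & (a/|a|)\bar b\\ -b\,\bar a/|a| & |a|\end{bmatrix}$ (for $a\neq0$). For a $2\times2$ matrix $B$, $B^{[p,q]}$ is the $N\times N$ matrix acting as $B$ on coordinates $(p,q)$ and as identity elsewhere. For $\mathbf Y\in\{\mathbf T,\mathbf M,\mathbf G\}$, the $\mathbf Y$-type DsiHT (natural path) generated by $\mathbf x$ is defined by: $a^{(0)}=x_0$; for $k=1,\dots,N-1$, $B_k=\mathbf Y(a^{(k-1)},x_k)$ and $a^{(k)}$ is the first component of $B_k(a^{(k-1)},x_k)^T$; $H_{\mathbf Y}=B_{N-1}^{[0,N-1]}\cdots B_1^{[0,1]}$. (Under the hypotheses all $B_k$ are well defined.) $\operatorname{sign}(t)\in\{\pm1\}$ is the sign of a nonzero real $t$. *)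

theory Defs
  imports Complex_Main
begin

text \<open>Matrices are represented as functions nat \<Rightarrow> nat \<Rightarrow> complex; an N x N matrix
  is one whose entries with indices in {0..<N} are meaningful.  A 2x2 matrix
  uses indices 0 and 1.\<close>

type_synonym cmat = "nat \<Rightarrow> nat \<Rightarrow> complex"

definition mat2 :: "complex \<Rightarrow> complex \<Rightarrow> complex \<Rightarrow> complex \<Rightarrow> cmat" where
  "mat2 a11 a12 a21 a22 = (\<lambda>i j. if i = 0 then (if j = 0 then a11 else a12)
                                    else (if j = 0 then a21 else a22))"

definition csign :: "real \<Rightarrow> complex" where
  "csign t = (if t > 0 then 1 else -1)"

definition nrm :: "complex \<Rightarrow> complex \<Rightarrow> real" where
  "nrm a b = sqrt ((cmod a)\<^sup>2 + (cmod b)\<^sup>2)"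

definition Tmat :: "complex \<Rightarrow> complex \<Rightarrow> cmat" where
  "Tmat a b = (\<lambda>i j. (csign (Re a) / complex_of_real (nrm a b)) *
       mat2 (cnj a) (cnj b) (- b) a i j)"

definition Mmat :: "complex \<Rightarrow> complex \<Rightarrow> cmat" where
  "Mmat a b = (\<lambda>i j. (1 / complex_of_real (nrm a b)) *
       mat2 (cnj a) (cnj b) (- b * cnj a / complex_of_real (cmod a)) (complex_of_real (cmod a)) i j)"

definition Gmat :: "complex \<Rightarrow> complex \<Rightarrow> cmat" where
  "Gmat a b = (\<lambda>i j. (1 / complex_of_real (nrm a b)) *
       mat2 (complex_of_real (cmod a)) ((a / complex_of_real (cmod a)) * cnj b)
            (- b * cnj a / complex_of_real (cmod a)) (complex_of_real (cmod a)) i j)"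

definition embed :: "cmat \<Rightarrow> nat \<Rightarrow> nat \<Rightarrow> cmat" where
  "embed B p q = (\<lambda>i j.
     if (i = p \<or> i = q) \<and> (j = p \<or> j = q)
     then B (if i = p then 0 else 1) (if j = p then 0 else 1)
     else (if i = j then 1 else 0))"

definition idm :: cmat where
  "idm = (\<lambda>i j. if i = j then 1 else 0)"

definition mmul :: "nat \<Rightarrow> cmat \<Rightarrow> cmat \<Rightarrow> cmat" where
  "mmul N A B = (\<lambda>i j. \<Sum>k<N. A i k * B k j)"

definition diagm :: "(nat \<Rightarrow> complex) \<Rightarrow> cmat" where
  "diagm d = (\<lambda>i j. if i = j then d i else 0)"

text \<open>Natural path: a^(0) = x_0, a^(k) = first component of B_k (a^(k-1), x_k)^T,
  with B_k = Y(a^(k-1), x_k).\<close>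
fun dsi_a :: "(complex \<Rightarrow> complex \<Rightarrow> cmat) \<Rightarrow> (nat \<Rightarrow> complex) \<Rightarrow> nat \<Rightarrow> complex" where
  "dsi_a Y x 0 = x 0"
| "dsi_a Y x (Suc k) =
     (let B = Y (dsi_a Y x k) (x (Suc k)) in B 0 0 * dsi_a Y x k + B 0 1 * x (Suc k))"

definition dsi_B :: "(complex \<Rightarrow> complex \<Rightarrow> cmat) \<Rightarrow> (nat \<Rightarrow> complex) \<Rightarrow> nat \<Rightarrow> cmat" where
  "dsi_B Y x k = Y (dsi_a Y x (k - 1)) (x k)"

fun dsi_P :: "(complex \<Rightarrow> complex \<Rightarrow> cmat) \<Rightarrow> (nat \<Rightarrow> complex) \<Rightarrow> nat \<Rightarrow> nat \<Rightarrow> cmat" where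
  "dsi_P Y x N 0 = idm"
| "dsi_P Y x N (Suc k) = mmul N (embed (dsi_B Y x (Suc k)) 0 (Suc k)) (dsi_P Y x N k)"

definition DsiHT :: "(complex \<Rightarrow> complex \<Rightarrow> cmat) \<Rightarrow> (nat \<Rightarrow> complex) \<Rightarrow> nat \<Rightarrow> cmat" where
  "DsiHT Y x N = dsi_P Y x N (N - 1)"

end

theory Submission
  imports Defs
begin

lemma mat2_simps[simp]: "mat2 a b c d 0 0 = a" "mat2 a b c d 0 (Suc 0) = b"
  "mat2 a b c d (Suc 0) 0 = c" "mat2 a b c d (Suc 0) (Suc 0) = d"
  by (simp_all add: mat2_def)

lemma nrm_pos: "a \<noteq> 0 \<Longrightarrow> nrm a b > 0"
  unfolding nrm_def by (simp add: add_pos_nonneg)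

lemma nrm_sq: "(nrm a b)\<^sup>2 = (cmod a)\<^sup>2 + (cmod b)\<^sup>2"
  unfolding nrm_def by simp

lemma cnj_sum: "cnj a * a + cnj b * b = complex_of_real ((nrm a b)\<^sup>2)"
  by (metis complex_norm_square mult.commute nrm_sq of_real_add)

lemma nrm_unit: "cmod u = 1 \<Longrightarrow> nrm (u * a) b = nrm a b"
  by (simp add: nrm_def norm_mult)

lemma M_first: assumes "a \<noteq> 0"
  shows "Mmat a b 0 0 * a + Mmat a b 0 1 * b = complex_of_real (nrm a b)"
proof -
  have n: "nrm a b > 0" using nrm_pos[OF assms] .
  have "Mmat a b 0 0 * a + Mmat a b 0 1 * b = (cnj a * a + cnj b * b) / complex_of_real (nrm a b)"
    by (simp add: Mmat_def add_divide_distrib)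
  also have "\<dots> = complex_of_real (nrm a b)" using n
    by (simp add: cnj_sum power2_eq_square)
  finally show ?thesis .
qed

lemma T_first: assumes "a \<noteq> 0"
  shows "Tmat a b 0 0 * a + Tmat a b 0 1 * b = csign (Re a) * complex_of_real (nrm a b)"
proof -
  have n: "nrm a b > 0" using nrm_pos[OF assms] .
  have "Tmat a b 0 0 * a + Tmat a b 0 1 * b = csign (Re a) * ((cnj a * a + cnj b * b) / complex_of_real (nrm a b))"
    by (simp add: Tmat_def algebra_simps add_divide_distrib)
  also have "\<dots> = csign (Re a) * complex_of_real (nrm a b)" using n
    by (simp add: cnj_sum power2_eq_square)
  finally show ?thesis .
qed

lemma G_first: assumes "a \<noteq> 0"
  shows "Gmat a b 0 0 * a + Gmat a b 0 1 * b = (a / complex_of_real (cmod a)) * complex_of_real (nrm a b)"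
proof -
  have n: "nrm a b > 0" using nrm_pos[OF assms] .
  have ca: "cmod a > 0" using assms by simp
  have e: "complex_of_real (cmod a) * a = (a / complex_of_real (cmod a)) * (cnj a * a)"
    using ca by (simp add: field_simps complex_norm_square[symmetric] power2_eq_square)
  have "Gmat a b 0 0 * a + Gmat a b 0 1 * b = (a / complex_of_real (cmod a)) * ((cnj a * a + cnj b * b) / complex_of_real (nrm a b))"
    unfolding Gmat_def using e by (simp add: algebra_simps add_divide_distrib)
  also have "\<dots> = (a / complex_of_real (cmod a)) * complex_of_real (nrm a b)" using n
    by (simp add: cnj_sum power2_eq_square)
  finally show ?thesis .
qed


lemma aM_pos: assumes "x 0 \<noteq> 0"
  shows "dsi_a Mmat x (Suc k) = complex_of_real (nrm (dsi_a Mmat x k) (x (Suc k)))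
         \<and> nrm (dsi_a Mmat x k) (x (Suc k)) > 0"
proof (induction k)
  case 0
  then show ?case using assms M_first[of "x 0" "x 1"] nrm_pos by (simp add: Let_def)
next
  case (Suc k)
  then have ne: "dsi_a Mmat x (Suc k) \<noteq> 0" by simp
  show ?case using M_first[OF ne] nrm_pos[OF ne] by (simp add: Let_def)
qed

lemma csign_pm: "csign t = 1 \<or> csign t = -1" by (simp add: csign_def)

lemma csign_scale: "(\<sigma> = 1 \<or> \<sigma> = -1) \<Longrightarrow> r > 0 \<Longrightarrow> csign (Re (\<sigma> * complex_of_real r)) = \<sigma>"
  by (auto simp: csign_def)

lemma aT: assumes "x 0 \<noteq> 0"
  shows "dsi_a Tmat x (Suc k) = csign (Re (x 0)) * dsi_a Mmat x (Suc k)"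
proof (induction k)
  case 0
  then show ?case using assms T_first[of "x 0" "x 1"] M_first[of "x 0" "x 1"] by (simp add: Let_def)
next
  case (Suc k)
  define \<sigma> where "\<sigma> = csign (Re (x 0))"
  obtain r where r: "dsi_a Mmat x (Suc k) = complex_of_real r" "r > 0" using aM_pos[of x k, OF assms] by blast
  have s1: "cmod \<sigma> = 1" using csign_pm[of "Re (x 0)"] unfolding \<sigma>_def by auto
  have aTk: "dsi_a Tmat x (Suc k) = \<sigma> * complex_of_real r" using Suc r \<sigma>_def by simp
  have ne: "\<sigma> * complex_of_real r \<noteq> 0" using s1 r by auto
  have "dsi_a Tmat x (Suc (Suc k)) = csign (Re (\<sigma> * complex_of_real r)) * complex_of_real (nrm (\<sigma> * complex_of_real r) (x (Suc (Suc k))))"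
    using T_first[OF ne] aTk by (simp add: Let_def)
  also have "\<dots> = \<sigma> * complex_of_real (nrm (complex_of_real r) (x (Suc (Suc k))))"
    using csign_scale[OF csign_pm r(2)] nrm_unit[OF s1] \<sigma>_def by simp
  also have "\<dots> = \<sigma> * dsi_a Mmat x (Suc (Suc k))"
    using aM_pos[of x "Suc k", OF assms] r by simp
  finally show ?case unfolding \<sigma>_def .
qed

lemma aG: assumes "x 0 \<noteq> 0"
  shows "dsi_a Gmat x (Suc k) = (x 0 / complex_of_real (cmod (x 0))) * dsi_a Mmat x (Suc k)"
proof (induction k)
  case 0
  then show ?case using assms G_first[of "x 0" "x 1"] M_first[of "x 0" "x 1"] by (simp add: Let_def)
next
  case (Suc k)
  define s where "s = x 0 / complex_of_real (cmod (x 0))"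
  obtain r where r: "dsi_a Mmat x (Suc k) = complex_of_real r" "r > 0" using aM_pos[of x k, OF assms] by blast
  have s1: "cmod s = 1" using assms unfolding s_def by (simp add: norm_divide)
  have aGk: "dsi_a Gmat x (Suc k) = s * complex_of_real r" using Suc r s_def by simp
  have ne: "s * complex_of_real r \<noteq> 0" using s1 r by auto
  have q: "s * complex_of_real r / complex_of_real (cmod (s * complex_of_real r)) = s"
    using s1 r by (simp add: norm_mult)
  have "dsi_a Gmat x (Suc (Suc k)) = s * complex_of_real (nrm (s * complex_of_real r) (x (Suc (Suc k))))"
    using G_first[OF ne] aGk q by (simp add: Let_def)
  also have "\<dots> = s * complex_of_real (nrm (complex_of_real r) (x (Suc (Suc k))))"
    using nrm_unit[OF s1] by simp
  also have "\<dots> = s * dsi_a Mmat x (Suc (Suc k))"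
    using aM_pos[of x "Suc k", OF assms] r by simp
  finally show ?case unfolding s_def .
qed


lemma less2: "(p::nat) < 2 \<Longrightarrow> p = 0 \<or> p = Suc 0" by auto

lemma T_step_entries:
  assumes "\<sigma> = 1 \<or> \<sigma> = -1" "r > 0" "p < 2" "q < 2"
  shows "Tmat (\<sigma> * complex_of_real r) b p q * (if q = 0 then \<sigma> else 1)
       = (if p = 0 then \<sigma> else 1) * Mmat (complex_of_real r) b p q"
proof -
  have c: "csign (Re (\<sigma> * complex_of_real r)) = \<sigma>" using csign_scale assms by blast
  have n: "nrm (\<sigma> * complex_of_real r) b = nrm (complex_of_real r) b"
    using assms(1) nrm_unit[of \<sigma>] by auto
  show ?thesis using assms(1,2) less2[OF assms(3)] less2[OF assms(4)]
    unfolding Tmat_def Mmat_def c n by auto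
qed

lemma G_step_entries:
  assumes "cmod s = 1" "r > 0" "p < 2" "q < 2"
  shows "Gmat (s * complex_of_real r) b p q * (if q = 0 then s else 1)
       = (if p = 0 then s else 1) * Mmat (complex_of_real r) b p q"
proof -
  have n: "nrm (s * complex_of_real r) b = nrm (complex_of_real r) b"
    using assms(1) nrm_unit[of s] by auto
  have cm: "cmod (s * complex_of_real r) = r" using assms by (simp add: norm_mult)
  have ss: "cnj s * s = 1" using assms(1) complex_norm_square[of s] by (simp add: mult.commute)
  have ne: "s \<noteq> 0" using assms by auto
  show ?thesis using assms(2) less2[OF assms(3)] less2[OF assms(4)] ss ne
    unfolding Gmat_def Mmat_def n cm by (auto simp: field_simps)
qed

lemma T_base_entries:
  assumes "a \<noteq> 0" "p < 2" "q < 2"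
  shows "Tmat a b p q * 1
       = (if p = 0 then csign (Re a) else csign (Re a) * (a / complex_of_real (cmod a))) * Mmat a b p q"
proof -
  have ca: "complex_of_real (cmod a) \<noteq> 0" using assms by simp
  have e: "a * cnj a = complex_of_real (cmod a) * complex_of_real (cmod a)"
    using complex_norm_square[of a] by (simp add: power2_eq_square)
  show ?thesis using less2[OF assms(2)] less2[OF assms(3)] ca e
    unfolding Tmat_def Mmat_def by (auto simp: field_simps)
qed

lemma G_base_entries:
  assumes "a \<noteq> 0" "p < 2" "q < 2"
  shows "Gmat a b p q * 1
       = (if p = 0 then a / complex_of_real (cmod a) else 1) * Mmat a b p q"
proof -
  have ca: "complex_of_real (cmod a) \<noteq> 0" using assms by simp
  have e: "a * cnj a = complex_of_real (cmod a) * complex_of_real (cmod a)"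
    using complex_norm_square[of a] by (simp add: power2_eq_square)
  show ?thesis using less2[OF assms(2)] less2[OF assms(3)] ca e
    unfolding Gmat_def Mmat_def by (auto simp: field_simps)
qed

lemma embed_rel:
  assumes "m \<noteq> 0" "\<And>i. i \<noteq> 0 \<Longrightarrow> i \<noteq> m \<Longrightarrow> dA i = dB i"
    "\<And>p q. p < 2 \<Longrightarrow> q < 2 \<Longrightarrow> A p q * dA (if q = 0 then 0 else m) = dB (if p = 0 then 0 else m) * B p q"
  shows "embed A 0 m i l * dA l = dB i * embed B 0 m i l"
proof -
  consider "i = 0 \<or> i = m" "l = 0 \<or> l = m" | "\<not> ((i = 0 \<or> i = m) \<and> (l = 0 \<or> l = m))" by blast
  then show ?thesis
  proof cases
    case 1
    then show ?thesis using assms(1) assms(3)[of "if i = 0 then 0 else 1" "if l = 0 then 0 else 1"]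
      unfolding embed_def by auto
  next
    case 2
    then show ?thesis using assms(2)[of i] unfolding embed_def by auto
  qed
qed

lemma P_rel:
  assumes "\<And>l j. l < N \<Longrightarrow> j < N \<Longrightarrow> PA l j = dA l * PB l j"
    "\<And>i l. EA i l * dA l = dB i * EB i l" "j < N"
  shows "mmul N EA PA i j = dB i * mmul N EB PB i j"
proof -
  have "mmul N EA PA i j = (\<Sum>l<N. EA i l * dA l * PB l j)"
    unfolding mmul_def using assms(1,3) by (auto intro!: sum.cong simp: mult.assoc)
  also have "\<dots> = (\<Sum>l<N. dB i * (EB i l * PB l j))"
    using assms(2) by (simp add: mult.assoc)
  also have "\<dots> = dB i * mmul N EB PB i j" unfolding mmul_def by (simp add: sum_distrib_left)
  finally show ?thesis .
qed

lemma mmul_diag: "i < N \<Longrightarrow> mmul N (diagm d) A i j = d i * A i j"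
proof -
  assume "i < N"
  have "mmul N (diagm d) A i j = (\<Sum>k<N. if k = i then d i * A i j else 0)"
    unfolding mmul_def diagm_def by (rule sum.cong) auto
  then show ?thesis using \<open>i < N\<close> by simp
qed


lemma PT: assumes "x 0 \<noteq> 0" "k \<ge> 1"
  shows "\<forall>i<N. \<forall>j<N. dsi_P Tmat x N k i j =
     (\<lambda>i. if i = 0 then csign (Re (x 0)) else if i = 1 then csign (Re (x 0)) * (x 0 / complex_of_real (cmod (x 0))) else 1) i
     * dsi_P Mmat x N k i j"
  using assms(2)
proof (induction k rule: nat_induct_at_least)
  case base
  show ?case
  proof (intro allI impI)
    fix i j assume "i < N" "j < N"
    show "dsi_P Tmat x N 1 i j = (\<lambda>i. if i = 0 then csign (Re (x 0)) else if i = 1 then csign (Re (x 0)) * (x 0 / complex_of_real (cmod (x 0))) else 1) i * dsi_P Mmat x N 1 i j"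
      apply (simp only: One_nat_def dsi_P.simps)
      apply (rule P_rel[where dA = "\<lambda>_. 1"])
        apply simp
       apply (rule embed_rel)
         apply simp
        apply simp
       apply (simp add: dsi_B_def)
      using T_base_entries[OF assms(1)] apply simp
      using \<open>j < N\<close> .
  qed
next
  case (Suc k)
  then obtain k' where k: "k = Suc k'" by (cases k) auto
  obtain r where r: "dsi_a Mmat x (Suc k') = complex_of_real r" "r > 0" using aM_pos[of x k', OF assms(1)] by blast
  have rT: "dsi_a Tmat x (Suc k') = csign (Re (x 0)) * complex_of_real r" using aT[of x k', OF assms(1)] r by simp
  have eT: "dsi_B Tmat x (Suc k) = Tmat (csign (Re (x 0)) * complex_of_real r) (x (Suc k))"
    unfolding dsi_B_def k using rT by simp
  have eM: "dsi_B Mmat x (Suc k) = Mmat (complex_of_real r) (x (Suc k))"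
    unfolding dsi_B_def k using r by simp
  have cond: "\<And>p q. p < 2 \<Longrightarrow> q < 2 \<Longrightarrow> Tmat (csign (Re (x 0)) * complex_of_real r) (x (Suc k)) p q * (\<lambda>i. if i = 0 then csign (Re (x 0)) else if i = 1 then csign (Re (x 0)) * (x 0 / complex_of_real (cmod (x 0))) else 1) (if q = 0 then 0 else Suc k) = (\<lambda>i. if i = 0 then csign (Re (x 0)) else if i = 1 then csign (Re (x 0)) * (x 0 / complex_of_real (cmod (x 0))) else 1) (if p = 0 then 0 else Suc k) * Mmat (complex_of_real r) (x (Suc k)) p q"
  proof -
    fix p q :: nat assume pq: "p < 2" "q < 2"
    show "?thesis p q"
      using T_step_entries[OF csign_pm[of "Re (x 0)"] r(2) pq, where b="x (Suc k)"]
      by (cases "q = 0"; cases "p = 0"; simp add: k)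
  qed
  show ?case
  proof (intro allI impI)
    fix i j assume "i < N" "j < N"
    show "dsi_P Tmat x N (Suc k) i j = (\<lambda>i. if i = 0 then csign (Re (x 0)) else if i = 1 then csign (Re (x 0)) * (x 0 / complex_of_real (cmod (x 0))) else 1) i * dsi_P Mmat x N (Suc k) i j"
      apply (simp only: dsi_P.simps)
      apply (rule P_rel)
        using Suc.IH apply blast
       apply (rule embed_rel)
         apply simp
        apply simp
       apply (unfold eT eM)
       apply (rule cond, assumption, assumption)
      using \<open>j < N\<close> .
  qed
qed

lemma PG: assumes "x 0 \<noteq> 0" "k \<ge> 1"
  shows "\<forall>i<N. \<forall>j<N. dsi_P Gmat x N k i j =
     (\<lambda>i. if i = 0 then x 0 / complex_of_real (cmod (x 0)) else 1) i
     * dsi_P Mmat x N k i j"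
  using assms(2)
proof (induction k rule: nat_induct_at_least)
  case base
  show ?case
  proof (intro allI impI)
    fix i j assume "i < N" "j < N"
    show "dsi_P Gmat x N 1 i j = (\<lambda>i. if i = 0 then x 0 / complex_of_real (cmod (x 0)) else 1) i * dsi_P Mmat x N 1 i j"
      apply (simp only: One_nat_def dsi_P.simps)
      apply (rule P_rel[where dA = "\<lambda>_. 1"])
        apply simp
       apply (rule embed_rel)
         apply simp
        apply simp
       apply (simp add: dsi_B_def)
      using G_base_entries[OF assms(1)] apply simp
      using \<open>j < N\<close> .
  qed
next
  case (Suc k)
  then obtain k' where k: "k = Suc k'" by (cases k) auto
  obtain r where r: "dsi_a Mmat x (Suc k') = complex_of_real r" "r > 0" using aM_pos[of x k', OF assms(1)] by blast
  have s1: "cmod (x 0 / complex_of_real (cmod (x 0))) = 1" using assms(1) by (simp add: norm_divide)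
  have rG: "dsi_a Gmat x (Suc k') = (x 0 / complex_of_real (cmod (x 0))) * complex_of_real r" using aG[of x k', OF assms(1)] r by simp
  have eG: "dsi_B Gmat x (Suc k) = Gmat ((x 0 / complex_of_real (cmod (x 0))) * complex_of_real r) (x (Suc k))"
    unfolding dsi_B_def k using rG by simp
  have eM: "dsi_B Mmat x (Suc k) = Mmat (complex_of_real r) (x (Suc k))"
    unfolding dsi_B_def k using r by simp
  have cond: "\<And>p q. p < 2 \<Longrightarrow> q < 2 \<Longrightarrow> Gmat ((x 0 / complex_of_real (cmod (x 0))) * complex_of_real r) (x (Suc k)) p q * (\<lambda>i. if i = 0 then x 0 / complex_of_real (cmod (x 0)) else 1) (if q = 0 then 0 else Suc k) = (\<lambda>i. if i = 0 then x 0 / complex_of_real (cmod (x 0)) else 1) (if p = 0 then 0 else Suc k) * Mmat (complex_of_real r) (x (Suc k)) p q"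
  proof -
    fix p q :: nat assume pq: "p < 2" "q < 2"
    show "?thesis p q"
      using G_step_entries[OF s1 r(2) pq, where b="x (Suc k)"]
      by (cases "q = 0"; cases "p = 0"; simp add: k)
  qed
  show ?case
  proof (intro allI impI)
    fix i j assume "i < N" "j < N"
    show "dsi_P Gmat x N (Suc k) i j = (\<lambda>i. if i = 0 then x 0 / complex_of_real (cmod (x 0)) else 1) i * dsi_P Mmat x N (Suc k) i j"
      apply (simp only: dsi_P.simps)
      apply (rule P_rel)
        using Suc.IH apply blast
       apply (rule embed_rel)
         apply simp
        apply simp
       apply (unfold eG eM)
       apply (rule cond, assumption, assumption)
      using \<open>j < N\<close> .
  qed
qed


theorem mainTheorem7:
  fixes N :: nat and x :: "nat \<Rightarrow> complex"
  assumes "N \<ge> 2" and "x 0 \<noteq> 0" and "Re (x 0) \<noteq> 0"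
  defines "\<sigma> \<equiv> csign (Re (x 0))"
      and "s \<equiv> x 0 / complex_of_real (cmod (x 0))"
  shows "(\<forall>i<N. \<forall>j<N. DsiHT Tmat x N i j =
            mmul N (diagm (\<lambda>i. if i = 0 then \<sigma> else if i = 1 then \<sigma> * s else 1))
                   (DsiHT Mmat x N) i j)
       \<and> (\<forall>i<N. \<forall>j<N. DsiHT Gmat x N i j =
            mmul N (diagm (\<lambda>i. if i = 0 then s else 1)) (DsiHT Mmat x N) i j)
       \<and> (\<forall>i. 2 \<le> i \<and> i < N \<longrightarrow> (\<forall>j<N.
            DsiHT Tmat x N i j = DsiHT Mmat x N i j \<and> DsiHT Gmat x N i j = DsiHT Mmat x N i j))
       \<and> (Re (x 0) > 0 \<longrightarrow> (\<forall>j<N. DsiHT Tmat x N 0 j = DsiHT Mmat x N 0 j))"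
proof -
  have k: "N - 1 \<ge> 1" using assms(1) by simp
  have T: "\<forall>i<N. \<forall>j<N. DsiHT Tmat x N i j = (if i = 0 then \<sigma> else if i = 1 then \<sigma> * s else 1) * DsiHT Mmat x N i j"
    using PT[of x "N - 1" N, OF assms(2) k] unfolding DsiHT_def \<sigma>_def s_def by simp
  have G: "\<forall>i<N. \<forall>j<N. DsiHT Gmat x N i j = (if i = 0 then s else 1) * DsiHT Mmat x N i j"
    using PG[of x "N - 1" N, OF assms(2) k] unfolding DsiHT_def s_def by simp
  have p: "Re (x 0) > 0 \<Longrightarrow> \<sigma> = 1" unfolding \<sigma>_def csign_def by simp
  show ?thesis
    using T G p assms(1) by (auto simp: mmul_diag)
qed

end
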